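(* Let $P$ be a convex point set in the plane and let $\vec d_1$ be a directed straight line not orthogonal to any line through two points of $P$. Then there exists a directed straight line $\vec d_2$, not orthogonal to any line through two points of $P$ and such that the clockwise rotation bringing $\vec d_1$ to coincide with $\vec d_2$ is at most $180^\circ$, for which the $(\vec d_1,\vec d_2)$-partition of $P$ is balanced.
   Context: A convex point set is a finite point set in the plane in which no point is a convex combination of the others; $\mathcal H_P$ denotes its convex hull. For a directed line $\vec d$ not orthogonal to any line through two points of $P$, order the points of $P$ by their orthogonal projections on $\vec d$; let $p_a(\vec d)$ and $p_b(\vec d)$ be the first (minimum) and last (maximum) point. Let $P_1(\vec d)$ be the set of points of $P$ encountered when walking clockwise along the boundary of $\mathcal H_P$ from $p_a(\vec d)$ to $p_b(\vec d)$, including $p_a(\vec d)$ and excluding $p_b(\vec d)$; let $P_2(\vec d)$ be the set of points encountered walking clockwise from $p_b(\vec d)$ to $p_a(\vec d)$, including $p_b(\vec d)$ and excluding $p_a(\vec d)$. For two such directed lines $\vec d_1,\vec d_2$ with the clockwise rotation bringing $\vec d_1$ to $\vec d_2$ at most $180^\circ$, the $(\vec d_1,\vec d_2)$-partition of $P$ consists of $P_a=P_1(\vec d_1)\cap P_1(\vec d_2)$, $P_b=P_1(\vec d_1)\cap P_2(\vec d_2)$, $P_c=P_2(\vec d_1)\cap P_1(\vec d_2)$, $P_d=P_2(\vec d_1)\cap P_2(\vec d_2)$. It is balanced if $|P_a|+|P_d|\le \frac{|P|}{2}+1$ and $|P_b|+|P_c|\le\frac{|P|}{2}+1$. *)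

theory Defs
  imports "HOL-Analysis.Analysis"
begin

text \<open>Points of the plane are elements of real \<times> real, with the standard
orientation (first coordinate to the right, second coordinate upwards).\<close>

definition convex_point_set :: "(real \<times> real) set \<Rightarrow> bool" where
  "convex_point_set P \<longleftrightarrow> finite P \<and> (\<forall>p\<in>P. p \<notin> convex hull (P - {p}))"

definition cross2 :: "real \<times> real \<Rightarrow> real \<times> real \<Rightarrow> real" where
  "cross2 u v = fst u * snd v - snd u * fst v"

text \<open>A directed line is represented by its (nonzero) direction vector d;
only its direction matters for the notions below.\<close>

definition admissible_dir :: "(real \<times> real) set \<Rightarrow> real \<times> real \<Rightarrow> bool" where
  "admissible_dir P d \<longleftrightarrow> d \<noteq> 0 \<and> (\<forall>p\<in>P. \<forall>q\<in>P. p \<noteq> q \<longrightarrow> (q - p) \<bullet> d \<noteq> 0)"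

definition p_a :: "(real \<times> real) set \<Rightarrow> real \<times> real \<Rightarrow> real \<times> real" where
  "p_a P d = (THE p. p \<in> P \<and> (\<forall>q\<in>P. q \<noteq> p \<longrightarrow> p \<bullet> d < q \<bullet> d))"

definition p_b :: "(real \<times> real) set \<Rightarrow> real \<times> real \<Rightarrow> real \<times> real" where
  "p_b P d = (THE p. p \<in> P \<and> (\<forall>q\<in>P. q \<noteq> p \<longrightarrow> q \<bullet> d < p \<bullet> d))"

text \<open>q is the clockwise successor of p on the boundary of the convex hull of P:
walking clockwise, the hull lies on the right, i.e. all other points of P are
strictly to the right of the directed segment from p to q.\<close>

definition cw_next :: "(real \<times> real) set \<Rightarrow> real \<times> real \<Rightarrow> real \<times> real \<Rightarrow> bool" where
  "cw_next P p q \<longleftrightarrow> p \<in> P \<and> q \<in> P \<and> p \<noteq> q \<and>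
     (\<forall>r\<in>P - {p, q}. cross2 (q - p) (r - p) < 0)"

definition cw_arc :: "(real \<times> real) set \<Rightarrow> real \<times> real \<Rightarrow> real \<times> real \<Rightarrow> (real \<times> real) set" where
  "cw_arc P a b = {r. \<exists>xs. xs \<noteq> [] \<and> hd xs = a \<and> last xs = b \<and> distinct xs \<and>
      (\<forall>i. Suc i < length xs \<longrightarrow> cw_next P (xs ! i) (xs ! Suc i)) \<and> r \<in> set (butlast xs)}"

definition P1 :: "(real \<times> real) set \<Rightarrow> real \<times> real \<Rightarrow> (real \<times> real) set" where
  "P1 P d = cw_arc P (p_a P d) (p_b P d)"

definition P2 :: "(real \<times> real) set \<Rightarrow> real \<times> real \<Rightarrow> (real \<times> real) set" where
  "P2 P d = cw_arc P (p_b P d) (p_a P d)"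

definition rot_cw :: "real \<Rightarrow> real \<times> real \<Rightarrow> real \<times> real" where
  "rot_cw t v = (fst v * cos t + snd v * sin t, - fst v * sin t + snd v * cos t)"

definition cw_within_180 :: "real \<times> real \<Rightarrow> real \<times> real \<Rightarrow> bool" where
  "cw_within_180 d1 d2 \<longleftrightarrow> (\<exists>t c. 0 \<le> t \<and> t \<le> pi \<and> c > 0 \<and> d2 = c *\<^sub>R rot_cw t d1)"

definition balanced_partition :: "(real \<times> real) set \<Rightarrow> real \<times> real \<Rightarrow> real \<times> real \<Rightarrow> bool" where
  "balanced_partition P d1 d2 \<longleftrightarrow>
    (let Pa = P1 P d1 \<inter> P1 P d2; Pb = P1 P d1 \<inter> P2 P d2;
         Pc = P2 P d1 \<inter> P1 P d2; Pd = P2 P d1 \<inter> P2 P d2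
     in real (card Pa) + real (card Pd) \<le> real (card P) / 2 + 1 \<and>
        real (card Pb) + real (card Pc) \<le> real (card P) / 2 + 1)"

end

theory Submission
  imports Defs
begin


lemma inner_co: "inner (a::real\<times>real) b = fst a * fst b + snd a * snd b"
  by (cases a; cases b) simp

lemma grass:
  fixes u v w d :: "real \<times> real"
  shows "cross2 u v * (w \<bullet> d) + cross2 v w * (u \<bullet> d) + cross2 w u * (v \<bullet> d) = 0"
  by (simp add: inner_co cross2_def algebra_simps)

lemma ident2:
  fixes a b x q d :: "real \<times> real"
  defines "f \<equiv> \<lambda>y. cross2 (b - a) (y - a)" and "g \<equiv> \<lambda>y. cross2 (q - x) (y - x)"
  shows "(f x * ((b - q) \<bullet> d) - f q * ((b - x) \<bullet> d)) * g a
       + (f x * ((q - a) \<bullet> d) - f q * ((x - a) \<bullet> d)) * g b = 0"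
  unfolding f_def g_def by (simp add: inner_co cross2_def algebra_simps)

lemma par_ident:
  fixes u v w :: "real \<times> real"
  shows "(u \<bullet> u) * cross2 v w = (u \<bullet> v) * cross2 u w - cross2 u v * (u \<bullet> w)"
  by (simp add: inner_co cross2_def algebra_simps)

lemma lag_ident:
  fixes u v w :: "real \<times> real"
  shows "(u \<bullet> u) * (v \<bullet> w) = (u \<bullet> v) * (u \<bullet> w) + cross2 u v * cross2 u w"
  by (simp add: inner_co cross2_def algebra_simps)

definition perp :: "real \<times> real \<Rightarrow> real \<times> real" where "perp v = (snd v, - fst v)"

lemma cross_basis:
  fixes u v d :: "real \<times> real"
  shows "cross2 u v * (d \<bullet> d) = (u \<bullet> perp d) * (v \<bullet> d) - (u \<bullet> d) * (v \<bullet> perp d)"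
  by (simp add: inner_co cross2_def perp_def algebra_simps)



lemma cross_anti: "cross2 u v = - cross2 v u"
  by (simp add: cross2_def)

lemma cross_shift: "cross2 (a - x) (b - x) = cross2 (b - a) (x - a)"
  by (simp add: cross2_def algebra_simps)

lemma step:
  fixes P :: "(real \<times> real) set"
  assumes exa: "\<forall>y\<in>P. y \<noteq> a \<longrightarrow> a \<bullet> d < y \<bullet> d"
    and exb: "\<forall>y\<in>P. y \<noteq> b \<longrightarrow> y \<bullet> d < b \<bullet> d"
    and aP: "a \<in> P" and bP: "b \<in> P" and ab: "a \<noteq> b"
    and xb: "x \<noteq> b" and xU: "x = a \<or> cross2 (b - a) (x - a) > 0"
    and nx: "cw_next P x q"
  shows "(q - x) \<bullet> d > 0 \<and> (q = b \<or> cross2 (b - a) (q - a) > 0)"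
proof -
  from nx have xP: "x \<in> P" and qP: "q \<in> P" and xq: "x \<noteq> q"
    and right: "\<And>r. r \<in> P - {x, q} \<Longrightarrow> cross2 (q - x) (r - x) < 0"
    unfolding cw_next_def by auto
  show ?thesis
  proof (cases "x = a")
    case True
    have 1: "(q - x) \<bullet> d > 0" using exa qP xq True by (simp add: inner_diff_left)
    have "q = b \<or> cross2 (b - a) (q - a) > 0"
    proof (cases "q = b")
      case False
      then have "cross2 (q - a) (b - a) < 0" using right[of b] bP ab True by auto
      then show ?thesis using cross_anti[of "b - a" "q - a"] by linarith
    qed simp
    with 1 show ?thesis by simp
  next
    case False
    with xU have fx: "cross2 (b - a) (x - a) > 0" by simp
    have lbx: "(b - x) \<bullet> d > 0" using exb xP xb by (simp add: inner_diff_left)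
    have lxa: "(x - a) \<bullet> d > 0" using exa xP False by (simp add: inner_diff_left)
    have qa: "q \<noteq> a"
    proof
      assume "q = a"
      then have "cross2 (a - x) (b - x) < 0" using right[of b] bP ab xb by auto
      then show False using fx cross_shift[of a x b] by simp
    qed
    show ?thesis
    proof (cases "q = b")
      case True
      then show ?thesis using lbx by simp
    next
      case False
      have ga: "cross2 (q - x) (a - x) < 0" using right[of a] aP qa False False \<open>x \<noteq> a\<close> by auto
      have gb: "cross2 (q - x) (b - x) < 0" using right[of b] bP False xb by auto
      have lqa: "(q - a) \<bullet> d > 0" using exa qP qa by (simp add: inner_diff_left)
      have lbq: "(b - q) \<bullet> d > 0" using exb qP False by (simp add: inner_diff_left)
      have G: "cross2 (q - x) (a - x) * ((b - x) \<bullet> d) + cross2 (a - x) (b - x) * ((q - x) \<bullet> d)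
          + cross2 (b - x) (q - x) * ((a - x) \<bullet> d) = 0" by (rule grass)
      have t1: "cross2 (q - x) (a - x) * ((b - x) \<bullet> d) < 0" using ga lbx by (simp add: mult_neg_pos)
      have "(a - x) \<bullet> d < 0" using lxa by (simp add: inner_diff_left)
      moreover have "cross2 (b - x) (q - x) > 0" using gb cross_anti[of "b - x" "q - x"] by linarith
      ultimately have t3: "cross2 (b - x) (q - x) * ((a - x) \<bullet> d) < 0" by (simp add: mult_pos_neg)
      have "cross2 (a - x) (b - x) * ((q - x) \<bullet> d) > 0" using G t1 t3 by linarith
      moreover have "cross2 (a - x) (b - x) > 0" using fx cross_shift[of a x b] by simp
      ultimately have lqx: "(q - x) \<bullet> d > 0" by (simp add: zero_less_mult_iff)
      have fq: "cross2 (b - a) (q - a) > 0"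
      proof (rule ccontr)
        assume "\<not> ?thesis"
        then have fq0: "cross2 (b - a) (q - a) \<le> 0" by simp
        have A: "cross2 (b - a) (x - a) * ((b - q) \<bullet> d) - cross2 (b - a) (q - a) * ((b - x) \<bullet> d) > 0"
        proof -
          have "cross2 (b - a) (x - a) * ((b - q) \<bullet> d) > 0" using fx lbq by simp
          moreover have "cross2 (b - a) (q - a) * ((b - x) \<bullet> d) \<le> 0" using fq0 lbx
            by (simp add: mult_nonpos_nonneg)
          ultimately show ?thesis by linarith
        qed
        have B: "cross2 (b - a) (x - a) * ((q - a) \<bullet> d) - cross2 (b - a) (q - a) * ((x - a) \<bullet> d) > 0"
        proof -
          have "cross2 (b - a) (x - a) * ((q - a) \<bullet> d) > 0" using fx lqa by simp
          moreover have "cross2 (b - a) (q - a) * ((x - a) \<bullet> d) \<le> 0" using fq0 lxa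
            by (simp add: mult_nonpos_nonneg)
          ultimately show ?thesis by linarith
        qed
        have "(cross2 (b - a) (x - a) * ((b - q) \<bullet> d) - cross2 (b - a) (q - a) * ((b - x) \<bullet> d)) * cross2 (q - x) (a - x) < 0"
          using A ga by (simp add: mult_pos_neg)
        moreover have "(cross2 (b - a) (x - a) * ((q - a) \<bullet> d) - cross2 (b - a) (q - a) * ((x - a) \<bullet> d)) * cross2 (q - x) (b - x) < 0"
          using B gb by (simp add: mult_pos_neg)
        ultimately show False using ident2[of b a x q d] by linarith
      qed
      show ?thesis using lqx fq by simp
    qed
  qed
qed



definition E :: "(real \<times> real) set \<Rightarrow> real \<times> real \<Rightarrow> (real \<times> real) set" where
  "E P d = {x \<in> P. \<exists>q. cw_next P x q \<and> (q - x) \<bullet> d > 0}"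

lemma arc_E:
  fixes P :: "(real \<times> real) set"
  assumes exa: "\<forall>y\<in>P. y \<noteq> a \<longrightarrow> a \<bullet> d < y \<bullet> d"
    and exb: "\<forall>y\<in>P. y \<noteq> b \<longrightarrow> y \<bullet> d < b \<bullet> d"
    and aP: "a \<in> P" and bP: "b \<in> P"
    and r: "r \<in> cw_arc P a b"
  shows "r \<in> E P d"
proof -
  obtain xs where ne: "xs \<noteq> []" and hd: "hd xs = a" and la: "last xs = b" and dis: "distinct xs"
    and nx: "\<And>i. Suc i < length xs \<Longrightarrow> cw_next P (xs ! i) (xs ! Suc i)"
    and rb: "r \<in> set (butlast xs)"
    using r unfolding cw_arc_def by blast
  define n where "n = length xs"
  from rb obtain i where i: "i < n - 1" and ri: "r = xs ! i"
    by (auto simp: in_set_conv_nth nth_butlast n_def)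
  have n2: "n \<ge> 2" using i by simp
  have h0: "xs ! 0 = a" using hd ne by (simp add: hd_conv_nth)
  have hl: "xs ! (n - 1) = b" using la ne by (simp add: last_conv_nth n_def)
  have ab: "a \<noteq> b"
  proof
    assume "a = b"
    then have "xs ! 0 = xs ! (n - 1)" using h0 hl by simp
    then have "0 = n - 1" using dis n2 by (subst (asm) nth_eq_iff_index_eq) (auto simp: n_def)
    then show False using n2 by simp
  qed
  have neqb: "\<And>j. j < n - 1 \<Longrightarrow> xs ! j \<noteq> b" using hl dis
    by (auto simp: nth_eq_iff_index_eq n_def)
  have inv: "\<And>j. j < n - 1 \<Longrightarrow> xs ! j = a \<or> cross2 (b - a) (xs ! j - a) > 0"
  proof -
    fix j show "j < n - 1 \<Longrightarrow> xs ! j = a \<or> cross2 (b - a) (xs ! j - a) > 0"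
    proof (induction j)
      case 0 then show ?case using h0 by simp
    next
      case (Suc j)
      have "xs ! Suc j = b \<or> cross2 (b - a) (xs ! Suc j - a) > 0"
        using step[OF exa exb aP bP ab neqb[of j] Suc.IH nx[of j]] Suc.prems by (simp add: n_def)
      then show ?case using neqb[OF Suc.prems] by simp
    qed
  qed
  have "(xs ! Suc i - xs ! i) \<bullet> d > 0"
    using step[OF exa exb aP bP ab neqb[OF i] inv[OF i] nx[of i]] i by (simp add: n_def)
  moreover have "cw_next P (xs ! i) (xs ! Suc i)" using nx i by (simp add: n_def)
  ultimately show ?thesis unfolding E_def ri cw_next_def by blast
qed



lemma adm_neg: "admissible_dir P (- d) = admissible_dir P d"
  unfolding admissible_dir_def by auto

lemma pb_eq: "p_b P d = p_a P (- d)"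
  unfolding p_a_def p_b_def by simp

lemma pa_props:
  assumes fin: "finite P" and ne: "P \<noteq> {}" and adm: "admissible_dir P d"
  shows "p_a P d \<in> P \<and> (\<forall>y\<in>P. y \<noteq> p_a P d \<longrightarrow> p_a P d \<bullet> d < y \<bullet> d)"
proof -
  define m where "m = Min ((\<lambda>y. y \<bullet> d) ` P)"
  have "m \<in> (\<lambda>y. y \<bullet> d) ` P" unfolding m_def using fin ne by simp
  then obtain a where aP: "a \<in> P" and am: "a \<bullet> d = m" by auto
  have le: "\<And>y. y \<in> P \<Longrightarrow> a \<bullet> d \<le> y \<bullet> d" unfolding am m_def using fin by simp
  have lt: "\<forall>y\<in>P. y \<noteq> a \<longrightarrow> a \<bullet> d < y \<bullet> d"
  proof (intro ballI impI)
    fix y assume "y \<in> P" "y \<noteq> a"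
    have "\<forall>p\<in>P. \<forall>q\<in>P. p \<noteq> q \<longrightarrow> (q - p) \<bullet> d \<noteq> 0" using adm unfolding admissible_dir_def by (rule conjunct2)
    then have "(y - a) \<bullet> d \<noteq> 0" using aP \<open>y \<in> P\<close> \<open>y \<noteq> a\<close> by metis
    then show "a \<bullet> d < y \<bullet> d" using le[OF \<open>y \<in> P\<close>] by (simp add: inner_diff_left)
  qed
  have "p_a P d = a" unfolding p_a_def
  proof (rule the_equality)
    show "a \<in> P \<and> (\<forall>q\<in>P. q \<noteq> a \<longrightarrow> a \<bullet> d < q \<bullet> d)" using aP lt by blast
  next
    fix p assume "p \<in> P \<and> (\<forall>q\<in>P. q \<noteq> p \<longrightarrow> p \<bullet> d < q \<bullet> d)"
    then have pP: "p \<in> P" and pl: "\<forall>q\<in>P. q \<noteq> p \<longrightarrow> p \<bullet> d < q \<bullet> d" by auto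
    show "p = a"
    proof (rule ccontr)
      assume "p \<noteq> a"
      then have "a \<bullet> d < p \<bullet> d" "p \<bullet> d < a \<bullet> d" using lt pl pP aP by auto
      then show False by simp
    qed
  qed
  then show ?thesis using aP lt by simp
qed

lemma arc_in_P: "r \<in> cw_arc P a b \<Longrightarrow> r \<in> P"
proof -
  assume "r \<in> cw_arc P a b"
  then obtain xs where nx: "\<And>i. Suc i < length xs \<Longrightarrow> cw_next P (xs ! i) (xs ! Suc i)"
    and rb: "r \<in> set (butlast xs)"
    unfolding cw_arc_def by blast
  from rb obtain i where i: "i < length xs - 1" and ri: "r = xs ! i"
    by (auto simp: in_set_conv_nth nth_butlast)
  show "r \<in> P" using nx[of i] i ri unfolding cw_next_def by simp
qed

lemma P1_E:
  assumes fin: "finite P" and adm: "admissible_dir P d" and r: "r \<in> P1 P d"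
  shows "r \<in> E P d"
proof -
  have ne: "P \<noteq> {}" using arc_in_P r unfolding P1_def by blast
  note A = pa_props[OF fin ne adm]
  have adm': "admissible_dir P (- d)" using adm adm_neg by blast
  have B0: "p_a P (- d) \<in> P \<and> (\<forall>y\<in>P. y \<noteq> p_a P (- d) \<longrightarrow> p_a P (- d) \<bullet> (- d) < y \<bullet> (- d))"
    by (rule pa_props[OF fin ne adm'])
  have B: "p_b P d \<in> P \<and> (\<forall>y\<in>P. y \<noteq> p_b P d \<longrightarrow> y \<bullet> d < p_b P d \<bullet> d)"
    using B0 unfolding pb_eq inner_minus_right by simp
  have r': "r \<in> cw_arc P (p_a P d) (p_b P d)" using r unfolding P1_def .
  show ?thesis
    by (rule arc_E[OF A[THEN conjunct2] B[THEN conjunct2] A[THEN conjunct1] B[THEN conjunct1] r'])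
qed

lemma P2_eq: "P2 P d = P1 P (- d)"
  unfolding P1_def P2_def pb_eq by simp

lemma P2_E:
  assumes fin: "finite P" and adm: "admissible_dir P d" and r: "r \<in> P2 P d"
  shows "r \<in> E P (- d)"
proof -
  have adm': "admissible_dir P (- d)" using adm adm_neg by blast
  show ?thesis using P1_E[OF fin adm'] r unfolding P2_eq by blast
qed

lemma cw_next_unique: "cw_next P x q \<Longrightarrow> cw_next P x q' \<Longrightarrow> q = q'"
proof (rule ccontr)
  assume a: "cw_next P x q" "cw_next P x q'" "q \<noteq> q'"
  then have "cross2 (q - x) (q' - x) < 0" "cross2 (q' - x) (q - x) < 0"
    unfolding cw_next_def by auto
  then show False using cross_anti[of "q - x" "q' - x"] by linarith
qed

lemma E_disj: "E P d \<inter> E P (- d) = {}"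
proof (rule ccontr)
  assume "E P d \<inter> E P (- d) \<noteq> {}"
  then obtain x q q' where "cw_next P x q" "(q - x) \<bullet> d > 0" "cw_next P x q'" "(q' - x) \<bullet> (- d) > 0"
    unfolding E_def by blast
  moreover then have "q = q'" using cw_next_unique by blast
  ultimately show False by (simp add: inner_minus_right)
qed



lemma avoid:
  fixes A :: "real set"
  assumes "finite A" "a < b"
  shows "\<exists>s. a < s \<and> s < b \<and> s \<notin> A"
proof -
  have "infinite {a<..<b}" using assms(2) by simp
  then have "\<not> {a<..<b} \<subseteq> A" using assms(1) finite_subset by blast
  then show ?thesis by auto
qed

lemma card_split:
  assumes "finite X"
  shows "card {x\<in>X. P x} + card {x\<in>X. \<not> P x} = card X"
proof -
  have "card ({x\<in>X. P x} \<union> {x\<in>X. \<not> P x}) = card {x\<in>X. P x} + card {x\<in>X. \<not> P x}"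
    by (rule card_Un_disjoint) (use assms in auto)
  moreover have "{x\<in>X. P x} \<union> {x\<in>X. \<not> P x} = X" by auto
  ultimately show ?thesis by simp
qed

lemma choose_s:
  fixes X :: "'a set" and \<kappa> :: "'a \<Rightarrow> real" and K :: "real set"
  assumes finX: "finite X" and finK: "finite K"
    and mult: "\<And>v. card {x\<in>X. \<kappa> x = v} \<le> 2"
  shows "\<exists>s. s \<notin> K \<and> s \<notin> \<kappa> ` X \<and> 2 * card {x\<in>X. \<kappa> x < s} \<le> card X + 2
             \<and> 2 * card {x\<in>X. s < \<kappa> x} \<le> card X + 2"
proof (cases "X = {}")
  case True
  obtain s where "s \<notin> K" using avoid[OF finK, of 0 1] by auto
  then show ?thesis using True by auto
next
  case False
  define A where "A = K \<union> \<kappa> ` X"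
  have finA: "finite A" unfolding A_def using finK finX by simp
  define m where "m = card X"
  have m0: "m > 0" unfolding m_def using False finX by (simp add: card_gt_0_iff)
  define V where "V = \<kappa> ` X"
  have finV: "finite V" unfolding V_def using finX by simp
  define S where "S = {w \<in> V. m \<le> 2 * card {x\<in>X. \<kappa> x \<le> w}}"
  have "Max V \<in> S"
  proof -
    have "Max V \<in> V" using finV False unfolding V_def by simp
    moreover have "{x\<in>X. \<kappa> x \<le> Max V} = X" using finV unfolding V_def by auto
    ultimately show ?thesis unfolding S_def m_def by simp
  qed
  then have Sne: "S \<noteq> {}" by blast
  have finS: "finite S" unfolding S_def using finV by simp
  define v where "v = Min S"
  have vS: "v \<in> S" unfolding v_def using finS Sne by simp
  have vmin: "\<And>w. w \<in> S \<Longrightarrow> v \<le> w" unfolding v_def using finS by simp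
  define L where "L = card {x\<in>X. \<kappa> x < v}"
  define mu where "mu = card {x\<in>X. \<kappa> x = v}"
  have mu2: "mu \<le> 2" unfolding mu_def by (rule mult)
  have Lmu: "card {x\<in>X. \<kappa> x \<le> v} = L + mu"
  proof -
    have "card {x\<in>{x\<in>X. \<kappa> x \<le> v}. \<kappa> x < v} + card {x\<in>{x\<in>X. \<kappa> x \<le> v}. \<not> \<kappa> x < v} = card {x\<in>X. \<kappa> x \<le> v}"
      by (rule card_split) (use finX in simp)
    moreover have "{x\<in>{x\<in>X. \<kappa> x \<le> v}. \<kappa> x < v} = {x\<in>X. \<kappa> x < v}" by auto
    moreover have "{x\<in>{x\<in>X. \<kappa> x \<le> v}. \<not> \<kappa> x < v} = {x\<in>X. \<kappa> x = v}" by auto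
    ultimately show ?thesis unfolding L_def mu_def by simp
  qed
  have mLmu: "m \<le> 2 * (L + mu)" using vS Lmu unfolding S_def by simp
  have L2: "2 * L < m"
  proof (rule ccontr)
    assume "\<not> 2 * L < m"
    then have ge: "m \<le> 2 * L" by simp
    then have "{x\<in>X. \<kappa> x < v} \<noteq> {}" using m0 unfolding L_def by (metis card.empty mult_0_right not_gr0 le_zero_eq)
    define W where "W = \<kappa> ` {x\<in>X. \<kappa> x < v}"
    have finW: "finite W" "W \<noteq> {}" unfolding W_def using finX \<open>{x\<in>X. \<kappa> x < v} \<noteq> {}\<close> by auto
    define w where "w = Max W"
    have wW: "w \<in> W" unfolding w_def using finW by simp
    have wv: "w < v" using wW unfolding W_def by auto
    have "{x\<in>X. \<kappa> x \<le> w} = {x\<in>X. \<kappa> x < v}"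
    proof
      show "{x\<in>X. \<kappa> x \<le> w} \<subseteq> {x\<in>X. \<kappa> x < v}" using wv by auto
      show "{x\<in>X. \<kappa> x < v} \<subseteq> {x\<in>X. \<kappa> x \<le> w}"
        using finW unfolding w_def W_def by auto
    qed
    moreover have "w \<in> V" using wW unfolding W_def V_def by auto
    ultimately have "w \<in> S" using ge unfolding S_def L_def by simp
    then show False using vmin wv by force
  qed
  show ?thesis
  proof (cases "2 * (m - L) \<le> m + 2")
    case True
    define lo where "lo = Max (insert (v - 1) {w\<in>V. w < v})"
    have finlo: "finite (insert (v - 1) {w\<in>V. w < v})" using finV by simp
    have lov: "lo < v" unfolding lo_def using finlo by simp
    obtain s where s: "lo < s" "s < v" "s \<notin> A" using avoid[OF finA lov] by auto
    have below: "\<And>x. x \<in> X \<Longrightarrow> \<kappa> x < v \<Longrightarrow> \<kappa> x \<le> lo"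
      unfolding lo_def using finlo V_def by auto
    have e1: "{x\<in>X. \<kappa> x < s} = {x\<in>X. \<kappa> x < v}" using below s by force
    have e2: "{x\<in>X. s < \<kappa> x} = {x\<in>X. \<not> \<kappa> x < v}" using below s by force
    have "card {x\<in>X. \<not> \<kappa> x < v} = m - L"
      using card_split[OF finX, of "\<lambda>x. \<kappa> x < v"] unfolding m_def L_def by simp
    then show ?thesis using True L2 s(3) e1 e2 unfolding A_def m_def L_def by auto
  next
    case False
    define hi where "hi = Min (insert (v + 1) {w\<in>V. v < w})"
    have finhi: "finite (insert (v + 1) {w\<in>V. v < w})" using finV by simp
    have vhi: "v < hi" unfolding hi_def using finhi by simp
    obtain s where s: "v < s" "s < hi" "s \<notin> A" using avoid[OF finA vhi] by auto
    have above: "\<And>x. x \<in> X \<Longrightarrow> v < \<kappa> x \<Longrightarrow> hi \<le> \<kappa> x"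
      unfolding hi_def using finhi V_def by auto
    have e1: "{x\<in>X. \<kappa> x < s} = {x\<in>X. \<kappa> x \<le> v}" using above s by force
    have e2: "{x\<in>X. s < \<kappa> x} = {x\<in>X. \<not> \<kappa> x \<le> v}" using above s by force
    have "card {x\<in>X. \<not> \<kappa> x \<le> v} = m - (L + mu)"
      using card_split[OF finX, of "\<lambda>x. \<kappa> x \<le> v"] Lmu unfolding m_def by simp
    then show ?thesis using False L2 mu2 mLmu s(3) e1 e2 Lmu unfolding A_def m_def by auto
  qed
qed



lemma same_dir_par:
  assumes nx: "cw_next P x q" and ny: "cw_next P y r" and xy: "x \<noteq> y"
    and par: "cross2 (q - x) (r - y) = 0" and pos: "(q - x) \<bullet> (r - y) > 0"
  shows False
proof -
  from nx have xP: "x \<in> P" and qP: "q \<in> P" and xq: "x \<noteq> q"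
    and Rx: "\<And>z. z \<in> P - {x, q} \<Longrightarrow> cross2 (q - x) (z - x) < 0"
    unfolding cw_next_def by auto
  from ny have yP: "y \<in> P" and rP: "r \<in> P" and yr: "y \<noteq> r"
    and Ry: "\<And>z. z \<in> P - {y, r} \<Longrightarrow> cross2 (r - y) (z - y) < 0"
    unfolding cw_next_def by auto
  show False
  proof (cases "y = q")
    case True
    show False
    proof (cases "x = r")
      case True
      have "r - y = - (q - x)" using True \<open>y = q\<close> by simp
      then have "(q - x) \<bullet> (r - y) = - ((q - x) \<bullet> (q - x))" unfolding \<open>r - y = - (q - x)\<close> inner_minus_right by simp
      then show False using pos inner_ge_zero[of "q - x"] by linarith  
    next
      case False
      then have "cross2 (r - y) (x - y) < 0" using Ry xP xy by auto
      moreover have "cross2 (r - y) (x - y) = cross2 (q - x) (r - y)" using True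
        by (simp add: cross2_def algebra_simps)
      ultimately show False using par by simp
    qed
  next
    case False
    then have c1: "cross2 (q - x) (y - x) < 0" using Rx yP xy by auto
    show False
    proof (cases "x = r")
      case True
      have "cross2 (q - x) (y - x) = - cross2 (q - x) (r - y)" using True
        by (simp add: cross2_def algebra_simps)
      then show False using c1 par by simp
    next
      case False
      then have c2: "cross2 (r - y) (x - y) < 0" using Ry xP xy by auto
      have I: "((q - x) \<bullet> (q - x)) * cross2 (r - y) (x - y) = ((q - x) \<bullet> (r - y)) * cross2 (q - x) (x - y)"
        using par_ident[of "q - x" "r - y" "x - y"] par by simp
      have "cross2 (q - x) (x - y) = - cross2 (q - x) (y - x)" by (simp add: cross2_def algebra_simps)
      then have "cross2 (q - x) (x - y) > 0" using c1 by simp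
      then have "((q - x) \<bullet> (r - y)) * cross2 (q - x) (x - y) > 0" using pos by simp
      moreover have "(q - x) \<bullet> (q - x) > 0" using xq by simp
      ultimately have "cross2 (r - y) (x - y) > 0" using I by (metis zero_less_mult_pos)
      then show False using c2 by simp
    qed
  qed
qed

lemma dot_ne_par:
  fixes u v :: "real \<times> real"
  assumes "u \<noteq> 0" "v \<noteq> 0" "cross2 u v = 0"
  shows "u \<bullet> v \<noteq> 0"
proof
  assume "u \<bullet> v = 0"
  then have "(u \<bullet> u) * (v \<bullet> v) = 0" using lag_ident[of u v v] assms(3) by simp
  then show False using assms by simp
qed

lemma three_par:
  assumes n1: "cw_next P x1 q1" and n2: "cw_next P x2 q2" and n3: "cw_next P x3 q3"
    and d12: "x1 \<noteq> x2" and d13: "x1 \<noteq> x3" and d23: "x2 \<noteq> x3"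
    and p12: "cross2 (q1 - x1) (q2 - x2) = 0" and p13: "cross2 (q1 - x1) (q3 - x3) = 0"
    and p23: "cross2 (q2 - x2) (q3 - x3) = 0"
  shows False
proof -
  have nz: "q1 - x1 \<noteq> 0" "q2 - x2 \<noteq> 0" "q3 - x3 \<noteq> 0" using n1 n2 n3 unfolding cw_next_def by auto
  have a: "(q1 - x1) \<bullet> (q2 - x2) < 0"
  proof -
    have "\<not> (q1 - x1) \<bullet> (q2 - x2) > 0" using same_dir_par[OF n1 n2 d12 p12] by blast
    then show ?thesis using dot_ne_par[OF nz(1) nz(2) p12] by linarith
  qed
  have b: "(q1 - x1) \<bullet> (q3 - x3) < 0"
  proof -
    have "\<not> (q1 - x1) \<bullet> (q3 - x3) > 0" using same_dir_par[OF n1 n3 d13 p13] by blast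
    then show ?thesis using dot_ne_par[OF nz(1) nz(3) p13] by linarith
  qed
  have "((q1 - x1) \<bullet> (q1 - x1)) * ((q2 - x2) \<bullet> (q3 - x3)) = ((q1 - x1) \<bullet> (q2 - x2)) * ((q1 - x1) \<bullet> (q3 - x3))"
    using lag_ident[of "q1 - x1" "q2 - x2" "q3 - x3"] p12 by simp
  moreover have "((q1 - x1) \<bullet> (q2 - x2)) * ((q1 - x1) \<bullet> (q3 - x3)) > 0" using a b by (simp add: mult_neg_neg)
  moreover have "(q1 - x1) \<bullet> (q1 - x1) > 0" using nz by simp
  ultimately have "(q2 - x2) \<bullet> (q3 - x3) > 0" by (metis zero_less_mult_pos)
  then show False using same_dir_par[OF n2 n3 d23 p23] by simp
qed



lemma kappa_pos:
  fixes a b s :: real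
  assumes "a \<noteq> 0"
  shows "(0 < a * (s * a + b)) \<longleftrightarrow> (- b / a < s)"
proof -
  have e: "a * (s * a + b) = (a * a) * (s + b / a)" using assms by (simp add: field_simps)
  have p: "a * a > 0" unfolding zero_less_mult_iff using assms by linarith
  have "(0 < a * (s * a + b)) \<longleftrightarrow> 0 < s + b / a" unfolding e using p by (simp add: zero_less_mult_iff)
  moreover have "- b / a = - (b / a)" by simp
  ultimately show ?thesis by linarith
qed

lemma kappa_neg:
  fixes a b s :: real
  assumes "a \<noteq> 0"
  shows "(a * (s * a + b) < 0) \<longleftrightarrow> (s < - b / a)"
proof -
  have e: "a * (s * a + b) = (a * a) * (s + b / a)" using assms by (simp add: field_simps)
  have p: "a * a > 0" unfolding zero_less_mult_iff using assms by linarith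
  have "(a * (s * a + b) < 0) \<longleftrightarrow> s + b / a < 0" unfolding e using p by (simp add: mult_less_0_iff)
  moreover have "- b / a = - (b / a)" by simp
  ultimately show ?thesis by linarith
qed

lemma three_elems:
  assumes "finite S" "card S > 2"
  shows "\<exists>a b c. a \<in> S \<and> b \<in> S \<and> c \<in> S \<and> a \<noteq> b \<and> a \<noteq> c \<and> b \<noteq> c"
proof -
  obtain a where a: "a \<in> S" using assms by fastforce
  have "card (S - {a}) > 1" using assms a by simp
  then have "S - {a} \<noteq> {}" by (metis card.empty not_one_less_zero)
  then obtain b where b: "b \<in> S - {a}" by blast
  have "card (S - {a} - {b}) > 0" using assms a b by (simp add: card_Diff_singleton)
  then obtain c where c: "c \<in> S - {a} - {b}" by (metis card.empty equals0I less_irrefl)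
  show ?thesis using a b c by blast
qed

lemma rot_ok:
  fixes s :: real and d1 :: "real \<times> real"
  shows "cw_within_180 d1 (s *\<^sub>R d1 + perp d1)"
proof -
  define c where "c = sqrt (s\<^sup>2 + 1)"
  have sp: "s\<^sup>2 + 1 > 0" by (simp add: add_nonneg_pos)
  have c0: "c > 0" unfolding c_def using sp by simp
  have c2: "c\<^sup>2 = s\<^sup>2 + 1" unfolding c_def using sp by simp
  define y where "y = s / c"
  have sc: "\<bar>s\<bar> \<le> c" unfolding c_def
    using real_sqrt_le_mono[of "s\<^sup>2" "s\<^sup>2 + 1"] by simp
  have y1: "-1 \<le> y" "y \<le> 1" unfolding y_def using sc c0 by (auto simp: field_simps abs_le_iff)
  define t where "t = arccos y"
  have t0: "0 \<le> t" "t \<le> pi" unfolding t_def using y1 by (auto intro: arccos_lbound arccos_ubound)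
  have cos: "c * cos t = s" unfolding t_def y_def using y1 c0 by (simp add: y_def cos_arccos)
  have sp': "1 + s\<^sup>2 \<noteq> 0" using sp by linarith
  have "1 - y\<^sup>2 = (1 / c)\<^sup>2" unfolding y_def using c0 c2 sp' by (simp add: field_simps power_divide)
  then have "sin t = 1 / c" unfolding t_def using y1 c0 by (simp add: sin_arccos)
  then have sin: "c * sin t = 1" using c0 by simp
  have "s *\<^sub>R d1 + perp d1 = c *\<^sub>R rot_cw t d1"
  proof -
    have 1: "c * (fst d1 * cos t + snd d1 * sin t) = fst d1 * (c * cos t) + snd d1 * (c * sin t)"
      by (simp add: algebra_simps)
    have 2: "c * (- fst d1 * sin t + snd d1 * cos t) = - fst d1 * (c * sin t) + snd d1 * (c * cos t)"
      by (simp add: algebra_simps)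
    show ?thesis using 1 2 unfolding cos sin
      by (simp add: rot_cw_def perp_def prod_eq_iff algebra_simps)
  qed
  then show ?thesis unfolding cw_within_180_def using t0 c0 by blast
qed



theorem lemma5:
  fixes P :: "(real \<times> real) set" and d1 :: "real \<times> real"
  assumes "convex_point_set P"
    and "admissible_dir P d1"
  shows "\<exists>d2. admissible_dir P d2 \<and> cw_within_180 d1 d2 \<and> balanced_partition P d1 d2"
proof -
  have fin: "finite P" using assms(1) unfolding convex_point_set_def by simp
  have adm1: "admissible_dir P d1" by (rule assms(2))
  have d1nz: "d1 \<noteq> 0" and adm1': "\<And>p q. p \<in> P \<Longrightarrow> q \<in> P \<Longrightarrow> p \<noteq> q \<Longrightarrow> (q - p) \<bullet> d1 \<noteq> 0"
    using adm1 unfolding admissible_dir_def by auto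
  define X where "X = {x\<in>P. \<exists>q. cw_next P x q}"
  define sc where "sc x = (THE q. cw_next P x q)" for x
  have sc_eq: "\<And>x q. cw_next P x q \<Longrightarrow> sc x = q"
    unfolding sc_def using cw_next_unique by blast
  have scn: "\<And>x. x \<in> X \<Longrightarrow> cw_next P x (sc x)"
    unfolding X_def using sc_eq by auto
  define \<alpha> where "\<alpha> x = (sc x - x) \<bullet> d1" for x
  define \<beta> where "\<beta> x = (sc x - x) \<bullet> perp d1" for x
  define \<kappa> where "\<kappa> x = - \<beta> x / \<alpha> x" for x
  have anz: "\<And>x. x \<in> X \<Longrightarrow> \<alpha> x \<noteq> 0"
    unfolding \<alpha>_def using scn adm1' unfolding cw_next_def by metis
  define K where "K = (\<lambda>(p, q). - ((q - p) \<bullet> perp d1) / ((q - p) \<bullet> d1)) ` (P \<times> P)"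
  have finK: "finite K" unfolding K_def using fin by simp
  have finX: "finite X" unfolding X_def using fin by simp
  have XP: "X \<subseteq> P" unfolding X_def by auto
  have mult: "\<And>v. card {x\<in>X. \<kappa> x = v} \<le> 2"
  proof (rule ccontr)
    fix v assume "\<not> card {x\<in>X. \<kappa> x = v} \<le> 2"
    then obtain x1 x2 x3 where xs: "x1 \<in> {x\<in>X. \<kappa> x = v}" "x2 \<in> {x\<in>X. \<kappa> x = v}" "x3 \<in> {x\<in>X. \<kappa> x = v}"
      "x1 \<noteq> x2" "x1 \<noteq> x3" "x2 \<noteq> x3"
      using three_elems[of "{x\<in>X. \<kappa> x = v}"] finX by auto
    have par: "cross2 (sc x - x) (sc y - y) = 0" if "x \<in> X" "y \<in> X" "\<kappa> x = \<kappa> y" for x y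
    proof -
      have ax: "\<alpha> x \<noteq> 0" and ay: "\<alpha> y \<noteq> 0" using anz that by auto
      have "\<beta> x * \<alpha> y = \<beta> y * \<alpha> x" using that(3) ax ay unfolding \<kappa>_def by (simp add: field_simps)
      then have "cross2 (sc x - x) (sc y - y) * (d1 \<bullet> d1) = 0"
        unfolding cross_basis \<alpha>_def \<beta>_def by (simp add: algebra_simps)
      then show ?thesis using d1nz by simp
    qed
    show False
      using three_par[OF scn scn scn, of x1 x2 x3] xs par by auto
  qed
  obtain s where s: "s \<notin> K" "s \<notin> \<kappa> ` X" "2 * card {x\<in>X. \<kappa> x < s} \<le> card X + 2"
    "2 * card {x\<in>X. s < \<kappa> x} \<le> card X + 2"
    using choose_s[OF finX finK mult] by blast
  define d2 where "d2 = s *\<^sub>R d1 + perp d1"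
  have ind2: "\<And>v. v \<bullet> d2 = s * (v \<bullet> d1) + v \<bullet> perp d1"
    unfolding d2_def by (simp add: inner_add_right)
  have adm2: "admissible_dir P d2"
  proof -
    have "d2 \<noteq> 0"
    proof
      assume "d2 = 0"
      then have "perp d1 \<bullet> d2 = 0" by simp
      then have "perp d1 \<bullet> perp d1 = 0" unfolding ind2 by (simp add: perp_def inner_co algebra_simps)
      then have "perp d1 = 0" by simp
      then show False using d1nz by (simp add: perp_def prod_eq_iff)
    qed
    moreover have "(q - p) \<bullet> d2 \<noteq> 0" if "p \<in> P" "q \<in> P" "p \<noteq> q" for p q
    proof
      assume "(q - p) \<bullet> d2 = 0"
      then have "s * ((q - p) \<bullet> d1) + (q - p) \<bullet> perp d1 = 0" unfolding ind2 .
      moreover have nz: "(q - p) \<bullet> d1 \<noteq> 0" using adm1' that by blast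
      ultimately have "s = - ((q - p) \<bullet> perp d1) / ((q - p) \<bullet> d1)" by (simp add: field_simps)
      moreover have "- ((q - p) \<bullet> perp d1) / ((q - p) \<bullet> d1) \<in> K" unfolding K_def using that by force
      ultimately show False using s(1) by simp
    qed
    ultimately show ?thesis unfolding admissible_dir_def by blast
  qed
  have E1: "\<And>x. x \<in> E P d1 \<Longrightarrow> x \<in> X \<and> \<alpha> x > 0"
    unfolding E_def X_def \<alpha>_def using sc_eq by auto
  have F1: "\<And>x. x \<in> E P (- d1) \<Longrightarrow> x \<in> X \<and> \<alpha> x < 0"
    unfolding E_def X_def \<alpha>_def using sc_eq by (auto simp: inner_minus_right)
  have E2: "\<And>x. x \<in> E P d2 \<Longrightarrow> s * \<alpha> x + \<beta> x > 0"
    unfolding E_def \<alpha>_def \<beta>_def using sc_eq ind2 by auto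
  have F2: "\<And>x. x \<in> E P (- d2) \<Longrightarrow> s * \<alpha> x + \<beta> x < 0"
    unfolding E_def \<alpha>_def \<beta>_def using sc_eq ind2 by (auto simp: inner_minus_right)
  define Pa where "Pa = P1 P d1 \<inter> P1 P d2"
  define Pb where "Pb = P1 P d1 \<inter> P2 P d2"
  define Pc where "Pc = P2 P d1 \<inter> P1 P d2"
  define Pd where "Pd = P2 P d1 \<inter> P2 P d2"
  have sameS: "Pa \<union> Pd \<subseteq> {x\<in>X. \<kappa> x < s}"
  proof
    fix x assume x: "x \<in> Pa \<union> Pd"
    have "x \<in> X \<and> 0 < \<alpha> x * (s * \<alpha> x + \<beta> x)"
    proof (cases "x \<in> Pa")
      case True
      then have "x \<in> E P d1" "x \<in> E P d2" unfolding Pa_def using P1_E fin adm1 adm2 by auto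
      then have "x \<in> X" "\<alpha> x > 0" "s * \<alpha> x + \<beta> x > 0" using E1 E2 by auto
      then show ?thesis using mult_pos_pos by blast
    next
      case False
      then have "x \<in> Pd" using x by simp
      then have "x \<in> E P (- d1)" "x \<in> E P (- d2)" unfolding Pd_def using P2_E fin adm1 adm2 by auto
      then have "x \<in> X" "\<alpha> x < 0" "s * \<alpha> x + \<beta> x < 0" using F1 F2 by auto
      then show ?thesis using mult_neg_neg by blast
    qed
    then show "x \<in> {x\<in>X. \<kappa> x < s}" using kappa_pos[OF anz[of x], of s "\<beta> x"] unfolding \<kappa>_def by simp
  qed
  have diffS: "Pb \<union> Pc \<subseteq> {x\<in>X. s < \<kappa> x}"
  proof
    fix x assume x: "x \<in> Pb \<union> Pc"
    have "x \<in> X \<and> \<alpha> x * (s * \<alpha> x + \<beta> x) < 0"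
    proof (cases "x \<in> Pb")
      case True
      then have "x \<in> E P d1" "x \<in> E P (- d2)" unfolding Pb_def using P1_E P2_E fin adm1 adm2 by auto
      then have "x \<in> X" "\<alpha> x > 0" "s * \<alpha> x + \<beta> x < 0" using E1 F2 by auto
      then show ?thesis using mult_pos_neg by blast
    next
      case False
      then have "x \<in> Pc" using x by simp
      then have "x \<in> E P (- d1)" "x \<in> E P d2" unfolding Pc_def using P1_E P2_E fin adm1 adm2 by auto
      then have "x \<in> X" "\<alpha> x < 0" "s * \<alpha> x + \<beta> x > 0" using F1 E2 by auto
      then show ?thesis using mult_neg_pos by blast
    qed
    then show "x \<in> {x\<in>X. s < \<kappa> x}" using kappa_neg[OF anz[of x], of s "\<beta> x"] unfolding \<kappa>_def by simp
  qed
  have P1sub: "\<And>d. P1 P d \<subseteq> P" unfolding P1_def using arc_in_P by blast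
  have P2sub: "\<And>d. P2 P d \<subseteq> P" unfolding P2_def using arc_in_P by blast
  have fins: "finite Pa" "finite Pb" "finite Pc" "finite Pd"
    unfolding Pa_def Pb_def Pc_def Pd_def
    using finite_subset[OF _ fin] P1sub[of d1] P2sub[of d1] by blast+
  have disj1: "Pa \<inter> Pd = {}"
  proof -
    have "Pa \<subseteq> E P d1" unfolding Pa_def using P1_E[OF fin adm1] by blast
    moreover have "Pd \<subseteq> E P (- d1)" unfolding Pd_def using P2_E[OF fin adm1] by blast
    ultimately show ?thesis using E_disj[of P d1] by blast
  qed
  have disj2: "Pb \<inter> Pc = {}"
  proof -
    have "Pb \<subseteq> E P d1" unfolding Pb_def using P1_E[OF fin adm1] by blast
    moreover have "Pc \<subseteq> E P (- d1)" unfolding Pc_def using P2_E[OF fin adm1] by blast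
    ultimately show ?thesis using E_disj[of P d1] by blast
  qed
  have cX: "card X \<le> card P" using card_mono[OF fin XP] .
  have c1: "card Pa + card Pd \<le> card {x\<in>X. \<kappa> x < s}"
  proof -
    have "card Pa + card Pd = card (Pa \<union> Pd)" using card_Un_disjoint[OF fins(1) fins(4) disj1] by simp
    also have "\<dots> \<le> card {x\<in>X. \<kappa> x < s}" by (rule card_mono) (use finX sameS in auto)
    finally show ?thesis .
  qed
  have c2: "card Pb + card Pc \<le> card {x\<in>X. s < \<kappa> x}"
  proof -
    have "card Pb + card Pc = card (Pb \<union> Pc)" using card_Un_disjoint[OF fins(2) fins(3) disj2] by simp
    also have "\<dots> \<le> card {x\<in>X. s < \<kappa> x}" by (rule card_mono) (use finX diffS in auto)
    finally show ?thesis .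
  qed
  have n1: "2 * (card Pa + card Pd) \<le> card P + 2"
  proof -
    have "2 * (card Pa + card Pd) \<le> 2 * card {x\<in>X. \<kappa> x < s}" using c1 by simp
    also have "\<dots> \<le> card X + 2" by (rule s(3))
    also have "\<dots> \<le> card P + 2" using cX by simp
    finally show ?thesis .
  qed
  have n2: "2 * (card Pb + card Pc) \<le> card P + 2"
  proof -
    have "2 * (card Pb + card Pc) \<le> 2 * card {x\<in>X. s < \<kappa> x}" using c2 by simp
    also have "\<dots> \<le> card X + 2" by (rule s(4))
    also have "\<dots> \<le> card P + 2" using cX by simp
    finally show ?thesis .
  qed
  have r1: "real (card Pa) + real (card Pd) \<le> real (card P) / 2 + 1"
  proof -
    have "real (2 * (card Pa + card Pd)) \<le> real (card P + 2)" using n1 by (simp only: of_nat_le_iff)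
    then show ?thesis by simp
  qed
  have r2: "real (card Pb) + real (card Pc) \<le> real (card P) / 2 + 1"
  proof -
    have "real (2 * (card Pb + card Pc)) \<le> real (card P + 2)" using n2 by (simp only: of_nat_le_iff)
    then show ?thesis by simp
  qed
  have bal: "balanced_partition P d1 d2"
    unfolding balanced_partition_def Let_def using r1 r2 unfolding Pa_def Pb_def Pc_def Pd_def by simp
  show ?thesis using adm2 rot_ok[of d1 s] bal unfolding d2_def by blast
qed


end
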